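(* Let $R$ be a commutative $\mathbb{C}$-algebra, let $f,g\colon\mathrm{Mac}^2\to R$ be $\mathbb{C}$-linear maps, and let $(G,\mathrm{wt})=(V,E,\mathrm{wt})$ be a weighted graph. Then $$(f*g)(\tilde{\mathbf{X}}_G)=\sum_{A\subseteq V}f(\tilde{\mathbf{X}}_{G|_A})\cdot g(\tilde{\mathbf{X}}_{G|_{\bar A}}),$$ where $\bar A=V\setminus A$.
   Context: All graphs are finite, simple and undirected. A weighted graph is a graph $(V,E)$ with $\mathrm{wt}\colon V\to\mathbb{P}$ ($\mathbb{P}$ the positive integers). For $A\subseteq V$, $G|_A$ is the induced subgraph on $A$ with restricted weights. Proper colorings are maps $\kappa\colon V\to\mathbb{P}$ with $\kappa(u)\ne\kappa(v)$ for every edge $uv$, forming $\mathrm{Col}(G)$. The chromatic MacMahon symmetric function is $\tilde{\mathbf{X}}_G=\sum_{\kappa\in\mathrm{Col}(G)}\prod_{v\in V}x_{\kappa(v)}y_{\kappa(v)}^{\mathrm{wt}(v)}$ (equal to $1$ for the empty graph) in commuting indeterminates $x_1,x_2,\dots,y_1,y_2,\dots$; it lies in $\mathrm{Mac}^2$, the algebra of power series invariant under simultaneously permuting indices of both alphabets. $\mathrm{Mac}^2$ has basis $p_{\boldsymbol{\Lambda}}=\prod_{i}p_{\boldsymbol{\lambda}^{(i)}}$ over unordered lists $\boldsymbol{\Lambda}=(\boldsymbol{\lambda}^{(1)},\dots,\boldsymbol{\lambda}^{(\ell)})$ of vectors in $\mathbb{N}^2\setminus\{(0,0)\}$, where $p_{(a,b)}=\sum_j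 x_j^ay_j^b$ and $p_\emptyset=1$. Its coproduct is the linear map $\Delta(p_{\boldsymbol{\Lambda}})=\sum_{J\subseteq[\ell]}p_{\boldsymbol{\Lambda}|_J}\otimes p_{\boldsymbol{\Lambda}|_{\bar J}}$, with $\boldsymbol{\Lambda}|_J$ having parts $\boldsymbol{\lambda}^{(i)}$, $i\in J$, and $\bar J=[\ell]\setminus J$. The convolution of $f,g$ is $(f*g)(B)=\sum f(B_1)g(B_2)$ where $\Delta(B)=\sum B_1\otimes B_2$. *)

theory Defs
  imports Complex_Main "HOL-Library.Multiset" "HOL-Library.Product_Lexorder"
begin

text \<open>A monomial is an exponent assignment m, where m j = (a,b) means the factor
  x_j^a y_j^b. Indices j range over the positive integers; a power series is
  its coefficient function. Monomials with m 0 nonzero or with infinite support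
  always get coefficient 0 for the series considered here.\<close>

type_synonym mono2 = "nat \<Rightarrow> nat \<times> nat"
type_synonym ps2 = "mono2 \<Rightarrow> complex"

definition valid_shape :: "(nat \<times> nat) multiset \<Rightarrow> bool" where
  "valid_shape \<Lambda> \<longleftrightarrow> (0, 0) \<notin># \<Lambda>"

text \<open>p_Lambda = product over i of sum_j x_j^(a_i) y_j^(b_i); expanding the product,
  the coefficient of a monomial m is the number of index choices
  j : [l] -> positive integers whose combined monomial is m.\<close>
definition pcoef :: "(nat \<times> nat) multiset \<Rightarrow> ps2" where
  "pcoef \<Lambda> m = (let xs = sorted_list_of_multiset \<Lambda>; l = length xs in
     of_nat (card {j :: nat \<Rightarrow> nat.
        (\<forall>i<l. 1 \<le> j i) \<and> (\<forall>i. l \<le> i \<longrightarrow> j i = 0) \<and>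
        (\<forall>k. m k = ((\<Sum>i\<in>{i. i < l \<and> j i = k}. fst (xs ! i)),
                     (\<Sum>i\<in>{i. i < l \<and> j i = k}. snd (xs ! i))))}))"

definition lincomb :: "(nat \<times> nat) multiset set \<Rightarrow> ((nat \<times> nat) multiset \<Rightarrow> complex) \<Rightarrow> ps2" where
  "lincomb S c = (\<lambda>m. \<Sum>\<Lambda>\<in>S. c \<Lambda> * pcoef \<Lambda> m)"

text \<open>Mac^2: the (bounded-degree) MacMahon symmetric functions, i.e. the complex
  span of the basis p_Lambda.\<close>
definition Mac2 :: "ps2 set" where
  "Mac2 = {B. \<exists>S c. finite S \<and> (\<forall>\<Lambda>\<in>S. valid_shape \<Lambda>) \<and> B = lincomb S c}"

definition conv_basis :: "(ps2 \<Rightarrow> 'r::comm_ring_1) \<Rightarrow> (ps2 \<Rightarrow> 'r) \<Rightarrow> (nat \<times> nat) multiset \<Rightarrow> 'r" where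
  "conv_basis f g \<Lambda> = (let xs = sorted_list_of_multiset \<Lambda>; l = length xs in
     \<Sum>J\<in>Pow {0..<l}. f (pcoef (mset (nths xs J))) * g (pcoef (mset (nths xs ({0..<l} - J)))))"

text \<open>R is a commutative C-algebra given by its structure map phi : C -> R.
  The convolution is extended linearly from the basis.\<close>
definition conv :: "(complex \<Rightarrow> 'r::comm_ring_1) \<Rightarrow> (ps2 \<Rightarrow> 'r) \<Rightarrow> (ps2 \<Rightarrow> 'r) \<Rightarrow> ps2 \<Rightarrow> 'r" where
  "conv \<phi> f g B = (SOME r. \<exists>S c. finite S \<and> (\<forall>\<Lambda>\<in>S. valid_shape \<Lambda>) \<and> B = lincomb S c \<and>
        r = (\<Sum>\<Lambda>\<in>S. \<phi> (c \<Lambda>) * conv_basis f g \<Lambda>))"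

definition c_linear_on_Mac2 :: "(complex \<Rightarrow> 'r::comm_ring_1) \<Rightarrow> (ps2 \<Rightarrow> 'r) \<Rightarrow> bool" where
  "c_linear_on_Mac2 \<phi> f \<longleftrightarrow>
     (\<forall>A\<in>Mac2. \<forall>B\<in>Mac2. f (\<lambda>m. A m + B m) = f A + f B) \<and>
     (\<forall>c. \<forall>A\<in>Mac2. f (\<lambda>m. c * A m) = \<phi> c * f A)"

definition ring_hom_C :: "(complex \<Rightarrow> 'r::comm_ring_1) \<Rightarrow> bool" where
  "ring_hom_C \<phi> \<longleftrightarrow> \<phi> 1 = 1 \<and> (\<forall>a b. \<phi> (a + b) = \<phi> a + \<phi> b) \<and> (\<forall>a b. \<phi> (a * b) = \<phi> a * \<phi> b)"

definition weighted_graph :: "'v set \<Rightarrow> 'v set set \<Rightarrow> ('v \<Rightarrow> nat) \<Rightarrow> bool" where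
  "weighted_graph V E wt \<longleftrightarrow> finite V \<and>
     (\<forall>e\<in>E. \<exists>u v. u \<noteq> v \<and> u \<in> V \<and> v \<in> V \<and> e = {u, v}) \<and>
     (\<forall>v\<in>V. 1 \<le> wt v)"

definition induced_edges :: "'v set set \<Rightarrow> 'v set \<Rightarrow> 'v set set" where
  "induced_edges E A = {e \<in> E. e \<subseteq> A}"

definition proper_colorings :: "'v set \<Rightarrow> 'v set set \<Rightarrow> ('v \<Rightarrow> nat) set" where
  "proper_colorings V E = {\<kappa>. (\<forall>v\<in>V. 1 \<le> \<kappa> v) \<and> (\<forall>v. v \<notin> V \<longrightarrow> \<kappa> v = 0) \<and>
      (\<forall>u\<in>V. \<forall>w\<in>V. {u, w} \<in> E \<longrightarrow> \<kappa> u \<noteq> \<kappa> w)}"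

text \<open>Coefficient of monomial m in X~_G = sum over proper kappa of prod_v x_kappa(v) y_kappa(v)^wt(v).\<close>
definition chromMac :: "'v set \<Rightarrow> 'v set set \<Rightarrow> ('v \<Rightarrow> nat) \<Rightarrow> ps2" where
  "chromMac V E wt m = of_nat (card {\<kappa> \<in> proper_colorings V E.
      \<forall>k. m k = (card {v \<in> V. \<kappa> v = k}, \<Sum>v\<in>{v \<in> V. \<kappa> v = k}. wt v)})"

end

theory Submission
  imports Defs "HOL-Combinatorics.List_Permutation"
begin

lemma phi_0: "ring_hom_C \<phi> \<Longrightarrow> \<phi> 0 = 0"
  unfolding ring_hom_C_def by (metis add.right_neutral add_left_cancel)

lemma phi_sum: "ring_hom_C \<phi> \<Longrightarrow> \<phi> (sum h S) = (\<Sum>x\<in>S. \<phi> (h x))"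
  by (induction S rule: infinite_finite_induct) (auto simp: phi_0 ring_hom_C_def)

lemma phi_neg1: "ring_hom_C \<phi> \<Longrightarrow> \<phi> (-1) = -1"
  unfolding ring_hom_C_def by (metis add.right_inverse add_eq_0_iff phi_0 ring_hom_C_def)

lemma phi_pow_neg1: "ring_hom_C \<phi> \<Longrightarrow> \<phi> ((-1) ^ n) = (-1) ^ n"
proof (induction n)
  case 0 then show ?case by (simp add: ring_hom_C_def)
next
  case (Suc n)
  have "\<phi> ((-1) ^ Suc n) = \<phi> (-1) * \<phi> ((-1) ^ n)"
    using \<open>ring_hom_C \<phi>\<close> unfolding ring_hom_C_def by (metis power_Suc)
  then show ?case using Suc phi_neg1[OF \<open>ring_hom_C \<phi>\<close>] by simp
qed

lemma lincomb_Mac2: "finite S \<Longrightarrow> \<forall>\<Lambda>\<in>S. valid_shape \<Lambda> \<Longrightarrow> lincomb S c \<in> Mac2"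
  unfolding Mac2_def by blast

lemma pcoef_Mac2: "valid_shape \<Lambda> \<Longrightarrow> pcoef \<Lambda> \<in> Mac2"
proof -
  assume "valid_shape \<Lambda>"
  moreover have "pcoef \<Lambda> = lincomb {\<Lambda>} (\<lambda>_. 1)" by (auto simp: lincomb_def)
  ultimately show ?thesis using lincomb_Mac2[of "{\<Lambda>}"] by auto
qed

lemma Mac2_add: assumes "A \<in> Mac2" "B \<in> Mac2" shows "(\<lambda>m. A m + B m) \<in> Mac2"
proof -
  obtain S1 c1 where 1: "finite S1" "\<forall>\<Lambda>\<in>S1. valid_shape \<Lambda>" "A = lincomb S1 c1"
    using assms(1) unfolding Mac2_def by blast
  obtain S2 c2 where 2: "finite S2" "\<forall>\<Lambda>\<in>S2. valid_shape \<Lambda>" "B = lincomb S2 c2"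
    using assms(2) unfolding Mac2_def by blast
  define d where "d \<Lambda> = (if \<Lambda> \<in> S1 then c1 \<Lambda> else 0) + (if \<Lambda> \<in> S2 then c2 \<Lambda> else 0)" for \<Lambda>
  have "lincomb S1 c1 m = (\<Sum>\<Lambda>\<in>S1\<union>S2. (if \<Lambda> \<in> S1 then c1 \<Lambda> else 0) * pcoef \<Lambda> m)" for m
    unfolding lincomb_def using 1(1) 2(1)
    by (intro sum.mono_neutral_cong_left) auto
  moreover have "lincomb S2 c2 m = (\<Sum>\<Lambda>\<in>S1\<union>S2. (if \<Lambda> \<in> S2 then c2 \<Lambda> else 0) * pcoef \<Lambda> m)" for m
    unfolding lincomb_def using 1 2
    by (intro sum.mono_neutral_cong_left) auto
  ultimately have "(\<lambda>m. A m + B m) = lincomb (S1 \<union> S2) d"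
    unfolding 1(3) 2(3) by (simp add: fun_eq_iff d_def lincomb_def sum.distrib[symmetric] distrib_right)
  moreover have "lincomb (S1 \<union> S2) d \<in> Mac2" by (rule lincomb_Mac2) (use 1 2 in auto)
  ultimately show ?thesis by simp
qed

lemma Mac2_smult: assumes "A \<in> Mac2" shows "(\<lambda>m. c * A m) \<in> Mac2"
proof -
  obtain S1 c1 where 1: "finite S1" "\<forall>\<Lambda>\<in>S1. valid_shape \<Lambda>" "A = lincomb S1 c1"
    using assms(1) unfolding Mac2_def by blast
  have "(\<lambda>m. c * A m) = lincomb S1 (\<lambda>\<Lambda>. c * c1 \<Lambda>)"
    using 1 by (auto simp: lincomb_def sum_distrib_left mult.assoc)
  then show ?thesis using 1 lincomb_Mac2 by auto
qed

lemma valid_empty: "valid_shape {#}" by (simp add: valid_shape_def)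

lemma zero_Mac2: "(\<lambda>m. 0) \<in> Mac2"
  using Mac2_smult[OF pcoef_Mac2[OF valid_empty], of 0] by simp

lemma lin_zero: assumes "ring_hom_C \<phi>" "c_linear_on_Mac2 \<phi> f" shows "f (\<lambda>m. 0) = 0"
proof -
  have "f (\<lambda>m. 0 * pcoef {#} m) = \<phi> 0 * f (pcoef {#})"
    using assms(2) pcoef_Mac2[OF valid_empty] unfolding c_linear_on_Mac2_def by blast
  then show ?thesis using phi_0[OF assms(1)] by simp
qed

lemma lin_sum:
  assumes "ring_hom_C \<phi>" "c_linear_on_Mac2 \<phi> f" "finite I" "\<forall>i\<in>I. B i \<in> Mac2"
  shows "f (\<lambda>m. \<Sum>i\<in>I. a i * B i m) = (\<Sum>i\<in>I. \<phi> (a i) * f (B i))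
     \<and> (\<lambda>m. \<Sum>i\<in>I. a i * B i m) \<in> Mac2"
  using assms(3,4)
proof (induction I rule: finite_induct)
  case empty
  then show ?case using lin_zero[OF assms(1,2)] zero_Mac2 by simp
next
  case (insert x F)
  have e: "(\<lambda>m. \<Sum>i\<in>insert x F. a i * B i m) = (\<lambda>m. (a x * B x m) + (\<Sum>i\<in>F. a i * B i m))"
    using insert by auto
  have m1: "(\<lambda>m. a x * B x m) \<in> Mac2" using insert Mac2_smult by auto
  have m2: "(\<lambda>m. \<Sum>i\<in>F. a i * B i m) \<in> Mac2" using insert by auto
  have "f (\<lambda>m. (a x * B x m) + (\<Sum>i\<in>F. a i * B i m)) = f (\<lambda>m. a x * B x m) + f (\<lambda>m. \<Sum>i\<in>F. a i * B i m)"
    using assms(2) m1 m2 unfolding c_linear_on_Mac2_def by simp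
  moreover have "f (\<lambda>m. a x * B x m) = \<phi> (a x) * f (B x)"
    using assms(2) insert unfolding c_linear_on_Mac2_def by blast
  ultimately show ?case using insert e Mac2_add[OF m1 m2] by simp
qed

definition Jset :: "(nat \<times> nat) list \<Rightarrow> mono2 \<Rightarrow> (nat \<Rightarrow> nat) set" where
  "Jset xs m = {j :: nat \<Rightarrow> nat.
        (\<forall>i<length xs. 1 \<le> j i) \<and> (\<forall>i. length xs \<le> i \<longrightarrow> j i = 0) \<and>
        (\<forall>k. m k = ((\<Sum>i\<in>{i. i < length xs \<and> j i = k}. fst (xs ! i)),
                     (\<Sum>i\<in>{i. i < length xs \<and> j i = k}. snd (xs ! i))))}"

lemma len_sorted[simp]: "length (sorted_list_of_multiset M) = size M"
  by (metis mset_sorted_list_of_multiset size_mset)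

lemma pcoef_Jset: "pcoef \<Lambda> m = of_nat (card (Jset (sorted_list_of_multiset \<Lambda>) m))"
  unfolding pcoef_def Jset_def Let_def by simp

definition mono_of :: "(nat \<times> nat) list \<Rightarrow> mono2" where
  "mono_of xs k = (if 1 \<le> k \<and> k \<le> length xs then xs ! (k - 1) else (0, 0))"

lemma valid_nz: "valid_shape \<Lambda> \<Longrightarrow> i < length (sorted_list_of_multiset \<Lambda>) \<Longrightarrow>
   sorted_list_of_multiset \<Lambda> ! i \<noteq> (0, 0)"
  unfolding valid_shape_def
  by (metis nth_mem set_sorted_list_of_multiset)

lemma sum_zero_member:
  fixes g :: "nat \<Rightarrow> nat"
  assumes "finite A" "i \<in> A" "sum g A = 0" shows "g i = 0"
  using assms by simp

lemma Jset_bound: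
  assumes nz: "\<And>i. i < length xs \<Longrightarrow> xs ! i \<noteq> (0, 0)"
    and j: "j \<in> Jset xs m" and i: "i < length xs" and mk: "m (j i) = (0, 0)"
  shows False
proof -
  let ?A = "{i'. i' < length xs \<and> j i' = j i}"
  have f: "finite ?A" by simp
  have "i \<in> ?A" using i by simp
  moreover have "m (j i) = ((\<Sum>i\<in>?A. fst (xs ! i)), (\<Sum>i\<in>?A. snd (xs ! i)))"
    using j unfolding Jset_def by blast
  then have "(\<Sum>i\<in>?A. fst (xs ! i)) = 0" "(\<Sum>i\<in>?A. snd (xs ! i)) = 0"
    using mk by simp_all
  ultimately have "fst (xs ! i) = 0" "snd (xs ! i) = 0" using f by simp_all
  then show False using nz[OF i] by (simp add: prod_eq_iff)
qed

lemma Jset_finite: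
  assumes nz: "\<And>i. i < length xs \<Longrightarrow> xs ! i \<noteq> (0, 0)"
    and mz: "\<And>k. k > N \<Longrightarrow> m k = (0, 0)"
  shows "finite (Jset xs m)"
proof -
  have P: "\<forall>i. (i \<in> {..<length xs} \<longrightarrow> j i \<in> {..N}) \<and> (i \<notin> {..<length xs} \<longrightarrow> j i = 0)"
    if j: "j \<in> Jset xs m" for j
  proof (intro allI conjI impI)
    fix i assume i: "i \<in> {..<length xs}"
    show "j i \<in> {..N}"
    proof (rule ccontr)
      assume "j i \<notin> {..N}"
      then have "m (j i) = (0, 0)" using mz by simp
      then show False using Jset_bound[OF nz j, of i] i by simp
    qed
  next
    fix i assume "i \<notin> {..<length xs}"
    then show "j i = 0" using j unfolding Jset_def by simp
  qed
  have "Jset xs m \<subseteq> {j. \<forall>i. (i \<in> {..<length xs} \<longrightarrow> j i \<in> {..N}) \<and> (i \<notin> {..<length xs} \<longrightarrow> j i = 0)}"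
    using P by blast
  then show ?thesis using finite_set_of_finite_funs[of "{..<length xs}" "{..N}" 0]
    using finite_subset by blast
qed

lemma mono_of_Jset: "(\<lambda>i. if i < length xs then Suc i else 0) \<in> Jset xs (mono_of xs)"
proof -
  let ?j = "\<lambda>i. if i < length xs then Suc i else 0"
  have "{i. i < length xs \<and> ?j i = k} = (if 1 \<le> k \<and> k \<le> length xs then {k - 1} else {})" for k
    by auto
  then show ?thesis unfolding Jset_def mono_of_def by auto
qed

lemma pcoef_mono_pos:
  assumes "valid_shape \<Lambda>"
  shows "card (Jset (sorted_list_of_multiset \<Lambda>) (mono_of (sorted_list_of_multiset \<Lambda>))) \<noteq> 0"
proof -
  let ?xs = "sorted_list_of_multiset \<Lambda>"
  have "finite (Jset ?xs (mono_of ?xs))"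
    by (rule Jset_finite[where N="length ?xs"]) (use valid_nz[OF assms] in \<open>auto simp: mono_of_def\<close>)
  then show ?thesis using mono_of_Jset[of ?xs] by auto
qed

lemma mset_nth: "mset xs = image_mset ((!) xs) (mset_set {..<length xs})"
proof -
  have "mset xs = mset (map ((!) xs) [0..<length xs])" by (simp add: map_nth)
  also have "\<dots> = image_mset ((!) xs) (mset_set {..<length xs})"
    by (simp add: mset_upt atLeast0LessThan)
  finally show ?thesis .
qed

lemma Jset_mono_le:
  assumes nz': "\<And>i. i < length xs' \<Longrightarrow> xs' ! i \<noteq> (0, 0)"
    and nz: "\<And>i. i < length xs \<Longrightarrow> xs ! i \<noteq> (0, 0)"
    and j: "j \<in> Jset xs' (mono_of xs)"
  shows "length xs \<le> length xs' \<and> (length xs = length xs' \<longrightarrow> mset xs' = mset xs)"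
proof -
  let ?l = "length xs" and ?l' = "length xs'"
  have jp: "\<forall>k. mono_of xs k = ((\<Sum>i\<in>{i. i < ?l' \<and> j i = k}. fst (xs' ! i)),
                     (\<Sum>i\<in>{i. i < ?l' \<and> j i = k}. snd (xs' ! i)))"
    using j unfolding Jset_def by blast
  have sub: "{1..?l} \<subseteq> j ` {..<?l'}"
  proof
    fix k assume k: "k \<in> {1..?l}"
    then have "k - 1 < ?l" by auto
    then have "mono_of xs k \<noteq> (0, 0)" using nz[of "k - 1"] k by (auto simp: mono_of_def)
    then have "{i. i < ?l' \<and> j i = k} \<noteq> {}" using jp[rule_format, of k] by auto
    then show "k \<in> j ` {..<?l'}" by auto
  qed
  have "?l = card {1..?l}" by simp
  also have "\<dots> \<le> card (j ` {..<?l'})" using sub by (intro card_mono) auto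
  also have "\<dots> \<le> ?l'" using card_image_le[of "{..<?l'}" j] by simp
  finally have le: "?l \<le> ?l'" .
  moreover have "mset xs' = mset xs" if eq: "?l = ?l'"
  proof -
    have up: "j i \<in> {1..?l}" if "i < ?l" for i
    proof -
      have "1 \<le> j i" using j that eq unfolding Jset_def by auto
      moreover have "j i \<le> ?l"
      proof (rule ccontr)
        assume "\<not> j i \<le> ?l"
        then have "mono_of xs (j i) = (0, 0)" by (simp add: mono_of_def)
        then show False using Jset_bound[OF nz' j, of i] that eq by simp
      qed
      ultimately show ?thesis by simp
    qed
    have img: "j ` {..<?l} = {1..?l}" using sub up eq by auto
    have inj: "inj_on j {..<?l}"
      using img by (simp add: eq_card_imp_inj_on)
    have val: "xs ! (j i - 1) = xs' ! i" if i: "i < ?l" for i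
    proof -
      have "{i'. i' < ?l' \<and> j i' = j i} = {i}" using inj i eq by (auto simp: inj_on_def)
      then have "mono_of xs (j i) = xs' ! i" using jp by simp
      then show ?thesis using up[OF i] by (simp add: mono_of_def)
    qed
    have inj2: "inj_on (\<lambda>i. j i - 1) {..<?l}"
    proof (rule inj_onI)
      fix a b assume a: "a \<in> {..<?l}" and b: "b \<in> {..<?l}" and e: "j a - 1 = j b - 1"
      have "1 \<le> j a" "1 \<le> j b" using up a b by auto
      then have "j a = j b" using e by simp
      then show "a = b" using inj a b by (simp add: inj_on_def)
    qed
    have img2: "(\<lambda>i. j i - 1) ` {..<?l} = {..<?l}"
    proof (rule endo_inj_surj)
      show "(\<lambda>i. j i - 1) ` {..<?l} \<subseteq> {..<?l}"
      proof
        fix x assume "x \<in> (\<lambda>i. j i - 1) ` {..<?l}"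
        then obtain i where i: "i < ?l" "x = j i - 1" by auto
        then show "x \<in> {..<?l}" using up[OF i(1)] by auto
      qed
    qed (use inj2 in auto)
    have "mset xs' = image_mset ((!) xs') (mset_set {..<?l})" using mset_nth[of xs'] eq by simp
    also have "\<dots> = image_mset (\<lambda>i. xs ! (j i - 1)) (mset_set {..<?l})"
      by (rule image_mset_cong) (use val in auto)
    also have "\<dots> = image_mset ((!) xs) (image_mset (\<lambda>i. j i - 1) (mset_set {..<?l}))"
      by (simp add: image_mset.compositionality o_def)
    also have "\<dots> = image_mset ((!) xs) (mset_set {..<?l})"
      using image_mset_mset_set[OF inj2] img2 by simp
    also have "\<dots> = mset xs" using mset_nth[of xs] by simp
    finally show ?thesis .
  qed
  ultimately show ?thesis by blast
qed

lemma independence: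
  assumes fin: "finite S" and val: "\<forall>\<Lambda>\<in>S. valid_shape \<Lambda>" and z: "\<And>m. lincomb S c m = 0"
  shows "\<forall>\<Lambda>\<in>S. c \<Lambda> = 0"
proof (rule ccontr)
  assume "\<not> (\<forall>\<Lambda>\<in>S. c \<Lambda> = 0)"
  then have ne: "{\<Lambda>\<in>S. c \<Lambda> \<noteq> 0} \<noteq> {}" by auto
  let ?S' = "{\<Lambda>\<in>S. c \<Lambda> \<noteq> 0}"
  have fS': "finite ?S'" using fin by simp
  define n where "n = Max (size ` ?S')"
  have "n \<in> size ` ?S'" unfolding n_def by (rule Max_in) (use fS' ne in auto)
  then obtain \<Lambda>0 where L0: "\<Lambda>0 \<in> ?S'" "size \<Lambda>0 = n" by auto
  have mx: "size \<Lambda> \<le> n" if "\<Lambda> \<in> ?S'" for \<Lambda> using that fS' unfolding n_def by simp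
  define xs0 where "xs0 = sorted_list_of_multiset \<Lambda>0"
  define m0 where "m0 = mono_of xs0"
  have other: "c \<Lambda> * pcoef \<Lambda> m0 = 0" if "\<Lambda> \<in> S - {\<Lambda>0}" for \<Lambda>
  proof (cases "c \<Lambda> = 0")
    case False
    show ?thesis
    proof (rule ccontr)
      assume "c \<Lambda> * pcoef \<Lambda> m0 \<noteq> 0"
      then have "card (Jset (sorted_list_of_multiset \<Lambda>) m0) \<noteq> 0" by (simp add: pcoef_Jset)
      then obtain j where j: "j \<in> Jset (sorted_list_of_multiset \<Lambda>) m0" by (metis card.empty equals0I)
      have "length xs0 \<le> length (sorted_list_of_multiset \<Lambda>) \<and>
          (length xs0 = length (sorted_list_of_multiset \<Lambda>) \<longrightarrow> mset (sorted_list_of_multiset \<Lambda>) = mset xs0)"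
        by (rule Jset_mono_le) (use valid_nz val that L0 j in \<open>auto simp: xs0_def m0_def\<close>)
      moreover have "size \<Lambda> \<le> n" using mx[of \<Lambda>] that False by simp
      ultimately have "\<Lambda> = \<Lambda>0" using L0 by (simp add: xs0_def)
      then show False using that by simp
    qed
  qed simp
  have "lincomb S c m0 = c \<Lambda>0 * pcoef \<Lambda>0 m0 + (\<Sum>\<Lambda>\<in>S - {\<Lambda>0}. c \<Lambda> * pcoef \<Lambda> m0)"
    unfolding lincomb_def using L0 by (intro sum.remove[OF fin]) simp
  also have "(\<Sum>\<Lambda>\<in>S - {\<Lambda>0}. c \<Lambda> * pcoef \<Lambda> m0) = 0"
    by (rule sum.neutral) (use other in blast)
  then have "c \<Lambda>0 * pcoef \<Lambda>0 m0 + (\<Sum>\<Lambda>\<in>S - {\<Lambda>0}. c \<Lambda> * pcoef \<Lambda> m0) = c \<Lambda>0 * pcoef \<Lambda>0 m0" by simp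
  finally have "c \<Lambda>0 * pcoef \<Lambda>0 m0 = 0" using z by simp
  moreover have "pcoef \<Lambda>0 m0 \<noteq> 0"
    using pcoef_mono_pos[of \<Lambda>0] val L0 by (simp add: pcoef_Jset m0_def xs0_def)
  ultimately show False using L0 by simp
qed

lemma lincomb_ext:
  assumes "finite U" "S \<subseteq> U"
  shows "lincomb S c m = (\<Sum>\<Lambda>\<in>U. (if \<Lambda> \<in> S then c \<Lambda> else 0) * pcoef \<Lambda> m)"
  unfolding lincomb_def using assms
  by (intro sum.mono_neutral_cong_left) auto

lemma uniq:
  assumes hom: "ring_hom_C \<phi>"
    and f1: "finite S1" "\<forall>\<Lambda>\<in>S1. valid_shape \<Lambda>"
    and f2: "finite S2" "\<forall>\<Lambda>\<in>S2. valid_shape \<Lambda>"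
    and eq: "lincomb S1 c1 = lincomb S2 c2"
  shows "(\<Sum>\<Lambda>\<in>S1. \<phi> (c1 \<Lambda>) * X \<Lambda>) = (\<Sum>\<Lambda>\<in>S2. \<phi> (c2 \<Lambda>) * X \<Lambda>)"
proof -
  let ?U = "S1 \<union> S2"
  define e1 where "e1 \<Lambda> = (if \<Lambda> \<in> S1 then c1 \<Lambda> else 0)" for \<Lambda>
  define e2 where "e2 \<Lambda> = (if \<Lambda> \<in> S2 then c2 \<Lambda> else 0)" for \<Lambda>
  have fU: "finite ?U" using f1 f2 by simp
  have "lincomb ?U (\<lambda>\<Lambda>. e1 \<Lambda> - e2 \<Lambda>) m = 0" for m
  proof -
    have a: "lincomb S1 c1 m = (\<Sum>\<Lambda>\<in>?U. e1 \<Lambda> * pcoef \<Lambda> m)"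
      unfolding e1_def by (rule lincomb_ext[OF fU]) auto
    have b: "lincomb S2 c2 m = (\<Sum>\<Lambda>\<in>?U. e2 \<Lambda> * pcoef \<Lambda> m)"
      unfolding e2_def by (rule lincomb_ext[OF fU]) auto
    have "lincomb ?U (\<lambda>\<Lambda>. e1 \<Lambda> - e2 \<Lambda>) m = lincomb S1 c1 m - lincomb S2 c2 m"
      unfolding a b by (simp add: lincomb_def sum_subtractf left_diff_distrib)
    then show ?thesis using eq by simp
  qed
  then have z: "\<forall>\<Lambda>\<in>?U. e1 \<Lambda> - e2 \<Lambda> = 0"
    by (intro independence) (use f1 f2 in auto)
  have "(\<Sum>\<Lambda>\<in>S1. \<phi> (c1 \<Lambda>) * X \<Lambda>) = (\<Sum>\<Lambda>\<in>?U. \<phi> (e1 \<Lambda>) * X \<Lambda>)"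
    unfolding e1_def using fU phi_0[OF hom] by (intro sum.mono_neutral_cong_left) auto
  also have "\<dots> = (\<Sum>\<Lambda>\<in>?U. \<phi> (e2 \<Lambda>) * X \<Lambda>)"
    using z by (intro sum.cong) auto
  also have "\<dots> = (\<Sum>\<Lambda>\<in>S2. \<phi> (c2 \<Lambda>) * X \<Lambda>)"
    unfolding e2_def using fU phi_0[OF hom] by (intro sum.mono_neutral_cong_right) auto
  finally show ?thesis .
qed

lemma conv_eq:
  assumes hom: "ring_hom_C \<phi>" and S0: "finite S0" "\<forall>\<Lambda>\<in>S0. valid_shape \<Lambda>" and B: "B = lincomb S0 c0"
  shows "conv \<phi> f g B = (\<Sum>\<Lambda>\<in>S0. \<phi> (c0 \<Lambda>) * conv_basis f g \<Lambda>)"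
proof -
  let ?P = "\<lambda>r. \<exists>S c. finite S \<and> (\<forall>\<Lambda>\<in>S. valid_shape \<Lambda>) \<and> B = lincomb S c \<and>
        r = (\<Sum>\<Lambda>\<in>S. \<phi> (c \<Lambda>) * conv_basis f g \<Lambda>)"
  have ex: "?P (\<Sum>\<Lambda>\<in>S0. \<phi> (c0 \<Lambda>) * conv_basis f g \<Lambda>)" using S0 B by blast
  have "?P (conv \<phi> f g B)" unfolding conv_def by (rule someI, rule ex)
  then obtain S c where Sc: "finite S" "\<forall>\<Lambda>\<in>S. valid_shape \<Lambda>" "B = lincomb S c"
     "conv \<phi> f g B = (\<Sum>\<Lambda>\<in>S. \<phi> (c \<Lambda>) * conv_basis f g \<Lambda>)" by blast
  show ?thesis unfolding Sc(4)
    by (rule uniq[OF hom Sc(1,2) S0]) (use Sc(3) B in simp)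
qed

definition hshape :: "('v \<Rightarrow> nat) \<Rightarrow> 'v set \<Rightarrow> nat \<times> nat" where
  "hshape wt B = (card B, sum wt B)"

definition shapeP :: "('v \<Rightarrow> nat) \<Rightarrow> 'v set set \<Rightarrow> (nat \<times> nat) multiset" where
  "shapeP wt P = image_mset (hshape wt) (mset_set P)"

definition is_partition :: "'v set \<Rightarrow> 'v set set \<Rightarrow> bool" where
  "is_partition V P \<longleftrightarrow> (\<forall>B\<in>P. B \<noteq> {} \<and> B \<subseteq> V) \<and> (\<forall>v\<in>V. \<exists>!B. B \<in> P \<and> v \<in> B)"

definition Col :: "'v set \<Rightarrow> 'v set set \<Rightarrow> ('v \<Rightarrow> nat) \<Rightarrow> mono2 \<Rightarrow> ('v \<Rightarrow> nat) set" where
  "Col V P wt m = {\<kappa>. (\<forall>v\<in>V. 1 \<le> \<kappa> v) \<and> (\<forall>v. v \<notin> V \<longrightarrow> \<kappa> v = 0) \<and>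
      (\<forall>B\<in>P. \<forall>u\<in>B. \<forall>w\<in>B. \<kappa> u = \<kappa> w) \<and>
      (\<forall>k. m k = (card {v \<in> V. \<kappa> v = k}, \<Sum>v\<in>{v \<in> V. \<kappa> v = k}. wt v))}"

lemma enum_partition:
  assumes "finite P" "mset xs = image_mset h (mset_set P)"
  shows "\<exists>\<tau>. bij_betw \<tau> {..<length xs} P \<and> (\<forall>i<length xs. xs ! i = h (\<tau> i))"
proof -
  obtain ps where ps: "distinct ps" "set ps = P" using finite_distinct_list[OF assms(1)] by blast
  have "mset (map h ps) = image_mset h (mset_set P)" using mset_set_set[OF ps(1)] ps(2) by simp
  then have "mset xs = mset (map h ps)" using assms(2) by simp
  then obtain \<pi> where pi: "bij_betw \<pi> {..<length xs} {..<length (map h ps)}"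
     "\<forall>i<length xs. xs ! i = map h ps ! (\<pi> i)"
    using permutation_Ex_bij by blast
  have b2: "bij_betw ((!) ps) {..<length ps} P" by (rule bij_betw_nth) (use ps in auto)
  have "bij_betw ((!) ps \<circ> \<pi>) {..<length xs} P"
    by (rule bij_betw_trans[OF _ b2]) (use pi in simp)
  moreover have "\<forall>i<length xs. xs ! i = h (((!) ps \<circ> \<pi>) i)"
    using pi bij_betwE by fastforce
  ultimately show ?thesis by blast
qed

lemma ex1_same: "\<exists>!x. P x \<Longrightarrow> P a \<Longrightarrow> P b \<Longrightarrow> a = b"
  by blast

lemma part_ex1: "is_partition V P \<Longrightarrow> v \<in> V \<Longrightarrow> \<exists>!B. B \<in> P \<and> v \<in> B"
  unfolding is_partition_def by simp

lemma ex1_ex': "\<exists>!x. P x \<Longrightarrow> \<exists>x. P x"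
  by blast

lemma part_ex: "is_partition V P \<Longrightarrow> v \<in> V \<Longrightarrow> \<exists>B. B \<in> P \<and> v \<in> B"
  by (rule ex1_ex', rule part_ex1)

lemma partition_finite: "finite V \<Longrightarrow> is_partition V P \<Longrightarrow> finite P"
  unfolding is_partition_def by (meson Pow_iff finite_Pow_iff finite_subset subsetI)

lemma pcoef_partition:
  assumes fV: "finite V" and part: "is_partition V P"
  shows "pcoef (shapeP wt P) m = of_nat (card (Col V P wt m))"
proof -
  have fP: "finite P" using partition_finite[OF fV part] .
  define xs where "xs = sorted_list_of_multiset (shapeP wt P)"
  define l where "l = length xs"
  have mx: "mset xs = image_mset (hshape wt) (mset_set P)" unfolding xs_def shapeP_def by simp
  obtain \<tau> where tau: "bij_betw \<tau> {..<l} P" "\<forall>i<l. xs ! i = hshape wt (\<tau> i)"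
    using enum_partition[OF fP mx] unfolding l_def by blast
  have tauP: "\<tau> i \<in> P" if "i < l" for i using tau(1) that bij_betwE by blast
  have tauV: "\<tau> i \<subseteq> V" "\<tau> i \<noteq> {}" if "i < l" for i using part tauP[OF that] unfolding is_partition_def by auto
  have tauinj: "\<tau> i = \<tau> i' \<Longrightarrow> i < l \<Longrightarrow> i' < l \<Longrightarrow> i = i'" for i i'
    using tau(1) unfolding bij_betw_def inj_on_def by (meson lessThan_iff)
  have uniq: "i = i'" if "i < l" "i' < l" "v \<in> \<tau> i" "v \<in> \<tau> i'" for i i' v
  proof -
    have "v \<in> V" using tauV that by auto
    have "\<forall>v\<in>V. \<exists>!B. B \<in> P \<and> v \<in> B" using part unfolding is_partition_def by (rule conjunct2)
    then have "\<exists>!B. B \<in> P \<and> v \<in> B" using \<open>v \<in> V\<close> by (rule bspec)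
    then have "\<tau> i = \<tau> i'" by (rule ex1_same) (use tauP[OF that(1)] tauP[OF that(2)] that(3,4) in simp_all)
    then show ?thesis using tauinj that by blast
  qed
  have ex: "\<exists>i<l. v \<in> \<tau> i" if "v \<in> V" for v
  proof -
    obtain B where "B \<in> P" "v \<in> B" using part_ex[OF part \<open>v \<in> V\<close>] by blast
    moreover have "P = \<tau> ` {..<l}" using tau(1) by (simp add: bij_betw_def)
    ultimately show ?thesis by auto
  qed
  define ix where "ix v = (THE i. i < l \<and> v \<in> \<tau> i)" for v
  have ix: "ix v < l \<and> v \<in> \<tau> (ix v)" if vV: "v \<in> V" for v
  proof -
    obtain i where i: "i < l" "v \<in> \<tau> i" using ex[OF vV] by blast
    have "ix v = i" unfolding ix_def by (rule the_equality) (use i uniq in auto)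
    then show ?thesis using i by simp
  qed
  have ix2: "ix v = i" if "i < l" "v \<in> \<tau> i" for i v
    unfolding ix_def by (rule the_equality) (use that uniq in auto)
  define \<Phi> where "\<Phi> j v = (if v \<in> V then j (ix v) else (0::nat))" for j v
  have setk: "{v \<in> V. \<Phi> j v = k} = \<Union> (\<tau> ` {i. i < l \<and> j i = k})" for j k
  proof (intro equalityI subsetI)
    fix v assume "v \<in> {v \<in> V. \<Phi> j v = k}"
    then have v: "v \<in> V" "\<Phi> j v = k" by auto
    then have "ix v \<in> {i. i < l \<and> j i = k}" "v \<in> \<tau> (ix v)" using ix[OF v(1)] unfolding \<Phi>_def by auto
    then show "v \<in> \<Union> (\<tau> ` {i. i < l \<and> j i = k})" by blast
  next
    fix v assume "v \<in> \<Union> (\<tau> ` {i. i < l \<and> j i = k})"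
    then obtain i where i: "i < l" "j i = k" "v \<in> \<tau> i" by auto
    then have "v \<in> V" using tauV by auto
    moreover have "\<Phi> j v = k" using i ix2[OF i(1,3)] \<open>v \<in> V\<close> unfolding \<Phi>_def by simp
    ultimately show "v \<in> {v \<in> V. \<Phi> j v = k}" by simp
  qed
  have disj: "\<forall>i\<in>{i. i < l \<and> j i = k}. \<forall>i'\<in>{i. i < l \<and> j i = k}. i \<noteq> i' \<longrightarrow> \<tau> i \<inter> \<tau> i' = {}" for j k
    using uniq by blast
  have finT: "\<forall>i\<in>{i. i < l \<and> j i = k}. finite (\<tau> i)" for j k
    using tauV fV finite_subset by blast
  have cardk: "card {v \<in> V. \<Phi> j v = k} = (\<Sum>i\<in>{i. i < l \<and> j i = k}. fst (xs ! i))" for j k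
    unfolding setk by (subst card_UN_disjoint[OF _ finT[of j k] disj[of j k]]) (auto simp: tau(2) hshape_def intro!: sum.cong)
  have sumk: "(\<Sum>v\<in>{v \<in> V. \<Phi> j v = k}. wt v) = (\<Sum>i\<in>{i. i < l \<and> j i = k}. snd (xs ! i))" for j k
    unfolding setk by (subst sum.UNION_disjoint[OF _ finT[of j k] disj[of j k]]) (auto simp: tau(2) hshape_def intro!: sum.cong)
  have J: "Jset xs m = {j. (\<forall>i<l. 1 \<le> j i) \<and> (\<forall>i. l \<le> i \<longrightarrow> j i = 0) \<and>
        (\<forall>k. m k = (card {v \<in> V. \<Phi> j v = k}, \<Sum>v\<in>{v \<in> V. \<Phi> j v = k}. wt v))}"
    unfolding Jset_def l_def[symmetric] cardk sumk by simp
  have bij: "bij_betw \<Phi> (Jset xs m) (Col V P wt m)"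
  proof (rule bij_betw_imageI)
    show "inj_on \<Phi> (Jset xs m)"
    proof (rule inj_onI)
      fix j j' assume j: "j \<in> Jset xs m" and j': "j' \<in> Jset xs m" and e: "\<Phi> j = \<Phi> j'"
      show "j = j'"
      proof
        fix i show "j i = j' i"
        proof (cases "i < l")
          case True
          then obtain v where v: "v \<in> \<tau> i" using tauV by blast
          then have "v \<in> V" using tauV True by auto
          then have "\<Phi> j v = j i" "\<Phi> j' v = j' i" using ix2[OF True v] unfolding \<Phi>_def by auto
          then show ?thesis using e by simp
        next
          case False
          then show ?thesis using j j' unfolding J by simp
        qed
      qed
    qed
  next
    show "\<Phi> ` Jset xs m = Col V P wt m"
    proof safe
      fix j assume j: "j \<in> Jset xs m"
      show "\<Phi> j \<in> Col V P wt m"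
        unfolding Col_def
      proof (intro CollectI conjI ballI allI impI)
        fix v assume "v \<in> V" then show "1 \<le> \<Phi> j v" using j ix unfolding J \<Phi>_def by auto
      next
        fix v assume "v \<notin> V" then show "\<Phi> j v = 0" unfolding \<Phi>_def by simp
      next
        fix B u w assume B: "B \<in> P" "u \<in> B" "w \<in> B"
        obtain i where i: "i < l" "\<tau> i = B" using B tau(1) by (metis bij_betw_iff_bijections lessThan_iff)
        show "\<Phi> j u = \<Phi> j w" using ix2[OF i(1)] i B tauV unfolding \<Phi>_def by auto
      next
        fix k show "m k = (card {v \<in> V. \<Phi> j v = k}, \<Sum>v\<in>{v \<in> V. \<Phi> j v = k}. wt v)"
          using j unfolding J by simp
      qed
    next
      fix \<kappa> assume \<kappa>: "\<kappa> \<in> Col V P wt m"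
      define j where "j i = (if i < l then \<kappa> (SOME v. v \<in> \<tau> i) else 0)" for i
      have some: "(SOME v. v \<in> \<tau> i) \<in> \<tau> i" if "i < l" for i using tauV[OF that] by (simp add: some_in_eq)
      have e: "\<Phi> j = \<kappa>"
      proof
        fix v show "\<Phi> j v = \<kappa> v"
        proof (cases "v \<in> V")
          case True
          have "\<kappa> (SOME v'. v' \<in> \<tau> (ix v)) = \<kappa> v"
            using \<kappa> some[of "ix v"] ix[OF True] tauP[of "ix v"] unfolding Col_def by blast
          then show ?thesis using True ix[OF True] unfolding \<Phi>_def j_def by simp
        next
          case False then show ?thesis using \<kappa> unfolding \<Phi>_def Col_def by simp
        qed
      qed
      have "j \<in> Jset xs m"
        unfolding J
      proof (intro CollectI conjI allI impI)
        fix i assume i: "i < l"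
        then show "1 \<le> j i" using \<kappa> some[OF i] tauV[OF i] unfolding j_def Col_def by auto
      next
        fix i assume "l \<le> i" then show "j i = 0" unfolding j_def by simp
      next
        fix k show "m k = (card {v \<in> V. \<Phi> j v = k}, \<Sum>v\<in>{v \<in> V. \<Phi> j v = k}. wt v)"
          using \<kappa> e unfolding Col_def by simp
      qed
      then show "\<kappa> \<in> \<Phi> ` Jset xs m" using e by blast
    qed
  qed
  then have "card (Jset xs m) = card (Col V P wt m)" by (rule bij_betw_same_card)
  then show ?thesis unfolding pcoef_Jset xs_def by simp
qed

definition erel :: "'v set set \<Rightarrow> ('v \<times> 'v) set" where
  "erel F = {(a, b). {a, b} \<in> F}"

definition cl :: "'v set set \<Rightarrow> 'v \<Rightarrow> 'v set" where
  "cl F v = {u. (v, u) \<in> (erel F)\<^sup>*}"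

definition comps :: "'v set \<Rightarrow> 'v set set \<Rightarrow> 'v set set" where
  "comps V F = cl F ` V"

definition good_edges :: "'v set \<Rightarrow> 'v set set \<Rightarrow> bool" where
  "good_edges V F \<longleftrightarrow> (\<forall>e\<in>F. \<exists>u w. u \<noteq> w \<and> u \<in> V \<and> w \<in> V \<and> e = {u, w})"

lemma erel_conv: "(erel F)\<inverse> = erel F"
  unfolding erel_def by (auto simp: insert_commute)

lemma rt_sym: "(a, b) \<in> (erel F)\<^sup>* \<Longrightarrow> (b, a) \<in> (erel F)\<^sup>*"
  by (metis erel_conv rtrancl_converseI)

lemma cl_refl: "v \<in> cl F v" unfolding cl_def by simp

lemma cl_eq: "u \<in> cl F w \<Longrightarrow> cl F u = cl F w"
  unfolding cl_def by (auto intro: rtrancl_trans dest: rt_sym)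

lemma good_edge_in: "good_edges V F \<Longrightarrow> {a, b} \<in> F \<Longrightarrow> a \<in> V \<and> b \<in> V"
  unfolding good_edges_def by (metis doubleton_eq_iff)

lemma cl_sub: assumes "good_edges V F" "v \<in> V" shows "cl F v \<subseteq> V"
proof
  fix u assume "u \<in> cl F v"
  then have "(v, u) \<in> (erel F)\<^sup>*" unfolding cl_def by simp
  then show "u \<in> V"
  proof (induction rule: rtrancl_induct)
    case base then show ?case using assms by simp
  next
    case (step y z)
    have "{y, z} \<in> F" using step(2) unfolding erel_def by simp
    then show ?case using good_edge_in[OF assms(1)] by blast
  qed
qed

lemma comps_partition: assumes "good_edges V F" shows "is_partition V (comps V F)"
proof -
  have 1: "B \<noteq> {} \<and> B \<subseteq> V" if B: "B \<in> comps V F" for B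
  proof -
    obtain v where "v \<in> V" "B = cl F v" using B unfolding comps_def by auto
    then show ?thesis using cl_refl[of v F] cl_sub[OF assms] by auto
  qed
  have 2: "\<exists>!B. B \<in> comps V F \<and> v \<in> B" if v: "v \<in> V" for v
  proof (rule ex1I[of _ "cl F v"])
    show "cl F v \<in> comps V F \<and> v \<in> cl F v" using v cl_refl unfolding comps_def by auto
  next
    fix B assume "B \<in> comps V F \<and> v \<in> B"
    then obtain w where "B = cl F w" "v \<in> cl F w" unfolding comps_def by auto
    then show "B = cl F v" using cl_eq[of v F w] by simp
  qed
  show ?thesis unfolding is_partition_def using 1 2 by simp
qed

lemma const_comps:
  assumes "good_edges V F"
  shows "(\<forall>B\<in>comps V F. \<forall>u\<in>B. \<forall>w\<in>B. \<kappa> u = \<kappa> w) \<longleftrightarrow> (\<forall>e\<in>F. \<forall>u\<in>e. \<forall>w\<in>e. \<kappa> u = \<kappa> w)"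
proof
  assume H: "\<forall>B\<in>comps V F. \<forall>u\<in>B. \<forall>w\<in>B. \<kappa> u = \<kappa> w"
  show "\<forall>e\<in>F. \<forall>u\<in>e. \<forall>w\<in>e. \<kappa> u = \<kappa> w"
  proof (intro ballI)
    fix e u w assume e: "e \<in> F" and u: "u \<in> e" and w: "w \<in> e"
    have "\<exists>u w. u \<noteq> w \<and> u \<in> V \<and> w \<in> V \<and> e = {u, w}" using assms e unfolding good_edges_def by simp
    then obtain a b where ab: "a \<in> V" "e = {a, b}" by blast
    have "(a, b) \<in> erel F" using e ab unfolding erel_def by simp
    then have b: "b \<in> cl F a" unfolding cl_def by simp
    have c: "cl F a \<in> comps V F" using ab unfolding comps_def by simp
    have "\<kappa> a = \<kappa> b" by (rule H[rule_format, OF c cl_refl b])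
    then show "\<kappa> u = \<kappa> w" using u w ab by (metis empty_iff insert_iff)
  qed
next
  assume H: "\<forall>e\<in>F. \<forall>u\<in>e. \<forall>w\<in>e. \<kappa> u = \<kappa> w"
  have k: "\<kappa> u = \<kappa> v" if "(v, u) \<in> (erel F)\<^sup>*" for u v
    using that
  proof (induction rule: rtrancl_induct)
    case base then show ?case by simp
  next
    case (step y z)
    have yz: "{y, z} \<in> F" using step(2) unfolding erel_def by simp
    have "\<kappa> y = \<kappa> z" by (rule H[rule_format, OF yz]) simp_all
    then show ?case using step(3) by (rule trans[OF sym])
  qed
  have "\<kappa> u = \<kappa> w" if "B \<in> comps V F" "u \<in> B" "w \<in> B" for B u w
  proof -
    have B: "B \<in> comps V F" "u \<in> B" "w \<in> B" using that by auto
    obtain v where "B = cl F v" using B(1) unfolding comps_def by auto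
    then have "(v, u) \<in> (erel F)\<^sup>*" "(v, w) \<in> (erel F)\<^sup>*" using B unfolding cl_def by auto
    then show ?thesis using k[of v u] k[of v w] by simp
  qed
  then show "\<forall>B\<in>comps V F. \<forall>u\<in>B. \<forall>w\<in>B. \<kappa> u = \<kappa> w" by blast
qed

lemma Col_finite:
  assumes fV: "finite V" shows "finite (Col V P wt m)"
proof (cases "Col V P wt m = {}")
  case False
  then obtain \<kappa>0 where k0: "\<kappa>0 \<in> Col V P wt m" by blast
  have "Col V P wt m \<subseteq> {\<kappa>. \<forall>v. (v \<in> V \<longrightarrow> \<kappa> v \<in> \<kappa>0 ` V) \<and> (v \<notin> V \<longrightarrow> \<kappa> v = 0)}"
  proof (intro subsetI CollectI allI conjI impI)
    fix \<kappa> v assume \<kappa>: "\<kappa> \<in> Col V P wt m" and v: "v \<in> V"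
    let ?k = "\<kappa> v"
    have "v \<in> {u \<in> V. \<kappa> u = ?k}" using v by simp
    then have "card {u \<in> V. \<kappa> u = ?k} \<noteq> 0" using fV by auto
    moreover have "m ?k = (card {u \<in> V. \<kappa> u = ?k}, \<Sum>u\<in>{u \<in> V. \<kappa> u = ?k}. wt u)"
      using \<kappa> unfolding Col_def by blast
    moreover have "m ?k = (card {u \<in> V. \<kappa>0 u = ?k}, \<Sum>u\<in>{u \<in> V. \<kappa>0 u = ?k}. wt u)"
      using k0 unfolding Col_def by blast
    ultimately have "card {u \<in> V. \<kappa>0 u = ?k} \<noteq> 0" by simp
    then have "{u \<in> V. \<kappa>0 u = ?k} \<noteq> {}" by (metis card.empty)
    then obtain x where "x \<in> V" "\<kappa>0 x = \<kappa> v" by auto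
    then show "\<kappa> v \<in> \<kappa>0 ` V" by (metis image_eqI)
  next
    fix \<kappa> v assume "\<kappa> \<in> Col V P wt m" "v \<notin> V"
    then show "\<kappa> v = 0" unfolding Col_def by blast
  qed
  moreover have "finite {\<kappa>. \<forall>v. (v \<in> V \<longrightarrow> \<kappa> v \<in> \<kappa>0 ` V) \<and> (v \<notin> V \<longrightarrow> \<kappa> v = 0)}"
    by (rule finite_set_of_finite_funs) (use fV in auto)
  ultimately show ?thesis using finite_subset by blast
qed simp

lemma alt_sum_pow:
  assumes "finite X"
  shows "(\<Sum>F\<in>Pow X. (-1::complex) ^ card F) = (if X = {} then 1 else 0)"
  using assms
proof (induction X rule: finite_induct)
  case empty then show ?case by simp
next
  case (insert x X)
  have fP: "finite (Pow X)" using insert by simp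
  have d: "Pow X \<inter> insert x ` Pow X = {}" using insert by auto
  have inj: "inj_on (insert x) (Pow X)"
  proof (rule inj_onI)
    fix A B assume A: "A \<in> Pow X" and B: "B \<in> Pow X" and e: "insert x A = insert x B"
    have "x \<notin> A" "x \<notin> B" using A B insert.hyps(2) by auto
    then show "A = B" by (metis Diff_insert_absorb e)
  qed
  have "(\<Sum>F\<in>Pow (insert x X). (-1::complex) ^ card F)
      = (\<Sum>F\<in>Pow X. (-1::complex) ^ card F) + (\<Sum>F\<in>insert x ` Pow X. (-1::complex) ^ card F)"
    unfolding Pow_insert by (rule sum.union_disjoint) (use fP d in auto)
  also have "(\<Sum>F\<in>insert x ` Pow X. (-1::complex) ^ card F) = (\<Sum>F\<in>Pow X. (-1::complex) ^ card (insert x F))"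
    by (rule sum.reindex[OF inj, unfolded o_def])
  also have "\<dots> = (\<Sum>F\<in>Pow X. - ((-1::complex) ^ card F))"
  proof (rule sum.cong)
    fix F assume "F \<in> Pow X"
    then have "finite F" "x \<notin> F" using insert finite_subset by auto
    then show "(-1::complex) ^ card (insert x F) = - ((-1) ^ card F)" by simp
  qed simp
  finally show ?case by (simp add: sum_negf)
qed

definition monoE :: "'v set set \<Rightarrow> ('v \<Rightarrow> nat) \<Rightarrow> 'v set set" where
  "monoE E \<kappa> = {e \<in> E. \<forall>u\<in>e. \<forall>w\<in>e. \<kappa> u = \<kappa> w}"

lemma Col_comps:
  assumes "good_edges V F"
  shows "Col V (comps V F) wt m = {\<kappa> \<in> Col V {} wt m. \<forall>e\<in>F. \<forall>u\<in>e. \<forall>w\<in>e. \<kappa> u = \<kappa> w}"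
proof -
  have e: "\<kappa> \<in> Col V (comps V F) wt m \<longleftrightarrow> \<kappa> \<in> Col V {} wt m \<and> (\<forall>e\<in>F. \<forall>u\<in>e. \<forall>w\<in>e. \<kappa> u = \<kappa> w)" for \<kappa>
    unfolding Col_def mem_Collect_eq const_comps[OF assms] by blast
  show ?thesis by (rule set_eqI) (simp only: mem_Collect_eq e)
qed

lemma chrom_expansion:
  assumes wg: "weighted_graph V E wt"
  shows "chromMac V E wt = (\<lambda>m. \<Sum>F\<in>Pow E. (-1) ^ card F * pcoef (shapeP wt (comps V F)) m)"
proof
  fix m
  have fV: "finite V" using wg unfolding weighted_graph_def by simp
  have fE: "finite E"
  proof -
    have "E \<subseteq> Pow V" using wg unfolding weighted_graph_def by auto
    then show ?thesis using fV by (meson finite_Pow_iff finite_subset)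
  qed
  let ?C = "Col V {} wt m"
  have fC: "finite ?C" using Col_finite[OF fV] .
  have ge: "good_edges V F" if "F \<in> Pow E" for F
    using wg that unfolding weighted_graph_def good_edges_def by blast
  have "(\<Sum>F\<in>Pow E. (-1) ^ card F * pcoef (shapeP wt (comps V F)) m)
      = (\<Sum>F\<in>Pow E. (-1) ^ card F * of_nat (card {\<kappa> \<in> ?C. F \<subseteq> monoE E \<kappa>}))"
  proof (rule sum.cong)
    fix F assume F: "F \<in> Pow E"
    have me: "F \<subseteq> monoE E \<kappa> \<longleftrightarrow> (\<forall>e\<in>F. \<forall>u\<in>e. \<forall>w\<in>e. \<kappa> u = \<kappa> w)" for \<kappa>
      unfolding monoE_def using F by blast
    have "Col V (comps V F) wt m = {\<kappa> \<in> ?C. F \<subseteq> monoE E \<kappa>}"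
      unfolding Col_comps[OF ge[OF F]] me ..
    then show "(-1) ^ card F * pcoef (shapeP wt (comps V F)) m = (-1) ^ card F * of_nat (card {\<kappa> \<in> ?C. F \<subseteq> monoE E \<kappa>})"
      using pcoef_partition[OF fV comps_partition[OF ge[OF F]]] by simp
  qed simp
  also have "\<dots> = (\<Sum>F\<in>Pow E. \<Sum>\<kappa>\<in>?C. if F \<subseteq> monoE E \<kappa> then (-1) ^ card F else 0)"
  proof (rule sum.cong)
    fix F
    have "of_nat (card {\<kappa> \<in> ?C. F \<subseteq> monoE E \<kappa>}) = (\<Sum>\<kappa>\<in>?C. if F \<subseteq> monoE E \<kappa> then 1 else (0::complex))"
      using fC by (simp add: sum.If_cases Int_def)
    then show "(-1) ^ card F * of_nat (card {\<kappa> \<in> ?C. F \<subseteq> monoE E \<kappa>}) = (\<Sum>\<kappa>\<in>?C. if F \<subseteq> monoE E \<kappa> then (-1) ^ card F else (0::complex))"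
      by (simp add: sum_distrib_left if_distrib cong: if_cong)
  qed simp
  also have "\<dots> = (\<Sum>\<kappa>\<in>?C. \<Sum>F\<in>Pow E. if F \<subseteq> monoE E \<kappa> then (-1) ^ card F else 0)"
    by (rule sum.swap)
  also have "\<dots> = (\<Sum>\<kappa>\<in>?C. if monoE E \<kappa> = {} then 1 else 0)"
  proof (rule sum.cong)
    fix \<kappa>
    have sub: "monoE E \<kappa> \<subseteq> E" unfolding monoE_def by auto
    have "(\<Sum>F\<in>Pow E. if F \<subseteq> monoE E \<kappa> then (-1::complex) ^ card F else 0) = (\<Sum>F\<in>Pow (monoE E \<kappa>). (-1::complex) ^ card F)"
      using sub fE by (intro sum.mono_neutral_cong_right) auto
    also have "\<dots> = (if monoE E \<kappa> = {} then 1 else 0)"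
      by (rule alt_sum_pow) (use sub fE finite_subset in auto)
    finally show "(\<Sum>F\<in>Pow E. if F \<subseteq> monoE E \<kappa> then (-1::complex) ^ card F else 0) = (if monoE E \<kappa> = {} then 1 else 0)" .
  qed simp
  also have "\<dots> = of_nat (card {\<kappa> \<in> ?C. monoE E \<kappa> = {}})"
    using fC by (simp add: sum.If_cases Int_def)
  also have "{\<kappa> \<in> ?C. monoE E \<kappa> = {}} = {\<kappa> \<in> proper_colorings V E.
      \<forall>k. m k = (card {v \<in> V. \<kappa> v = k}, \<Sum>v\<in>{v \<in> V. \<kappa> v = k}. wt v)}"
  proof (intro equalityI subsetI)
    fix \<kappa> assume k: "\<kappa> \<in> {\<kappa> \<in> ?C. monoE E \<kappa> = {}}"
    have "\<kappa> u \<noteq> \<kappa> w" if "u \<in> V" "w \<in> V" "{u, w} \<in> E" for u w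
    proof
      assume "\<kappa> u = \<kappa> w"
      then have "{u, w} \<in> monoE E \<kappa>" using that unfolding monoE_def by auto
      then show False using k by simp
    qed
    then show "\<kappa> \<in> {\<kappa> \<in> proper_colorings V E. \<forall>k. m k = (card {v \<in> V. \<kappa> v = k}, \<Sum>v\<in>{v \<in> V. \<kappa> v = k}. wt v)}"
      using k unfolding proper_colorings_def Col_def by auto
  next
    fix \<kappa> assume k: "\<kappa> \<in> {\<kappa> \<in> proper_colorings V E. \<forall>k. m k = (card {v \<in> V. \<kappa> v = k}, \<Sum>v\<in>{v \<in> V. \<kappa> v = k}. wt v)}"
    have "monoE E \<kappa> = {}"
    proof (rule ccontr)
      assume "monoE E \<kappa> \<noteq> {}"
      then obtain e where e: "e \<in> E" "\<forall>u\<in>e. \<forall>w\<in>e. \<kappa> u = \<kappa> w" unfolding monoE_def by auto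
      then obtain u w where uw: "u \<in> V" "w \<in> V" "e = {u, w}" using wg unfolding weighted_graph_def by blast
      then have "\<kappa> u \<noteq> \<kappa> w" using k e unfolding proper_colorings_def by auto
      then show False using e uw by auto
    qed
    then show "\<kappa> \<in> {\<kappa> \<in> ?C. monoE E \<kappa> = {}}" using k unfolding proper_colorings_def Col_def by auto
  qed
  finally show "chromMac V E wt m = (\<Sum>F\<in>Pow E. (-1) ^ card F * pcoef (shapeP wt (comps V F)) m)"
    unfolding chromMac_def by simp
qed

lemma mset_nths: "mset (nths xs J) = image_mset ((!) xs) (mset_set {i. i < length xs \<and> i \<in> J})"
proof (induction xs rule: rev_induct)
  case Nil then show ?case by simp
next
  case (snoc x xs)
  let ?n = "length xs"
  let ?A = "{i. i < ?n \<and> i \<in> J}"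
  have fA: "finite ?A" by simp
  have nA: "?n \<notin> ?A" by simp
  have n1: "nths (xs @ [x]) J = nths xs J @ (if ?n \<in> J then [x] else [])"
    by (simp add: nths_append)
  have c: "image_mset ((!) (xs @ [x])) (mset_set ?A) = image_mset ((!) xs) (mset_set ?A)"
    by (rule image_mset_cong) (simp add: nth_append)
  show ?case
  proof (cases "?n \<in> J")
    case True
    have "{i. i < length (xs @ [x]) \<and> i \<in> J} = insert ?n ?A" using True by auto
    then have "mset_set {i. i < length (xs @ [x]) \<and> i \<in> J} = add_mset ?n (mset_set ?A)"
      using fA nA by simp
    then show ?thesis using True n1 c snoc by simp
  next
    case False
    have "{i. i < length (xs @ [x]) \<and> i \<in> J} = ?A" using False less_Suc_eq by auto
    then show ?thesis using False n1 c snoc by simp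
  qed
qed

lemma conv_basis_shapeP:
  assumes fP: "finite P"
  shows "conv_basis f g (shapeP wt P) =
    (\<Sum>Q\<in>Pow P. f (pcoef (shapeP wt Q)) * g (pcoef (shapeP wt (P - Q))))"
proof -
  define xs where "xs = sorted_list_of_multiset (shapeP wt P)"
  define l where "l = length xs"
  have mx: "mset xs = image_mset (hshape wt) (mset_set P)" unfolding xs_def shapeP_def by simp
  obtain \<tau> where tau: "bij_betw \<tau> {..<l} P" "\<forall>i<l. xs ! i = hshape wt (\<tau> i)"
    using enum_partition[OF fP mx] unfolding l_def by blast
  have inj: "inj_on \<tau> {..<l}" using tau(1) by (simp add: bij_betw_def)
  have img: "\<tau> ` {..<l} = P" using tau(1) by (simp add: bij_betw_def)
  have key: "mset (nths xs J) = shapeP wt (\<tau> ` J)" if J: "J \<subseteq> {..<l}" for J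
  proof -
    have "{i. i < length xs \<and> i \<in> J} = J" using J unfolding l_def by auto
    then have "mset (nths xs J) = image_mset ((!) xs) (mset_set J)" by (simp add: mset_nths)
    also have "\<dots> = image_mset (hshape wt \<circ> \<tau>) (mset_set J)"
    proof (rule image_mset_cong)
      have fJ: "finite J" using J finite_subset by blast
      fix x assume "x \<in># mset_set J"
      then have "x \<in> J" using fJ by simp
      then show "xs ! x = (hshape wt \<circ> \<tau>) x" using J tau(2) by auto
    qed
    also have "\<dots> = image_mset (hshape wt) (image_mset \<tau> (mset_set J))"
      by (simp add: image_mset.compositionality)
    also have "image_mset \<tau> (mset_set J) = mset_set (\<tau> ` J)"
      by (rule image_mset_mset_set) (use inj J inj_on_subset in blast)
    finally show ?thesis unfolding shapeP_def .
  qed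
  have "conv_basis f g (shapeP wt P) =
     (\<Sum>J\<in>Pow {..<l}. f (pcoef (mset (nths xs J))) * g (pcoef (mset (nths xs ({..<l} - J)))))"
    unfolding conv_basis_def Let_def xs_def[symmetric] l_def[symmetric] by (simp add: atLeast0LessThan)
  also have "\<dots> = (\<Sum>Q\<in>Pow P. f (pcoef (shapeP wt Q)) * g (pcoef (shapeP wt (P - Q))))"
  proof (rule sum.reindex_bij_witness[where j = "\<lambda>J. \<tau> ` J" and i = "\<lambda>Q. {i \<in> {..<l}. \<tau> i \<in> Q}"])
    fix J assume "J \<in> Pow {..<l}"
    then show "{i \<in> {..<l}. \<tau> i \<in> \<tau> ` J} = J" using inj by (auto simp: inj_on_def)
  next
    fix J assume "J \<in> Pow {..<l}"
    then show "\<tau> ` J \<in> Pow P" using img by auto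
  next
    fix Q assume "Q \<in> Pow P"
    then show "\<tau> ` {i \<in> {..<l}. \<tau> i \<in> Q} = Q" using img by auto
  next
    fix Q assume "Q \<in> Pow P"
    then show "{i \<in> {..<l}. \<tau> i \<in> Q} \<in> Pow {..<l}" by auto
  next
    fix J assume J: "J \<in> Pow {..<l}"
    have d: "\<tau> ` ({..<l} - J) = P - \<tau> ` J"
    proof -
      have "J \<subseteq> {..<l}" using J by simp
      then have "\<tau> ` ({..<l} - J) = \<tau> ` {..<l} - \<tau> ` J" by (intro inj_on_image_set_diff[OF inj]) auto
      then show ?thesis using img by simp
    qed
    show "f (pcoef (shapeP wt (\<tau> ` J))) * g (pcoef (shapeP wt (P - \<tau> ` J))) =
          f (pcoef (mset (nths xs J))) * g (pcoef (mset (nths xs ({..<l} - J))))"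
      using key[of J] key[of "{..<l} - J"] J d by auto
  qed
  finally show ?thesis .
qed

definition closed_set :: "'v set set \<Rightarrow> 'v set \<Rightarrow> bool" where
  "closed_set F A \<longleftrightarrow> (\<forall>e\<in>F. e \<subseteq> A \<or> e \<inter> A = {})"

definition Fres :: "'v set set \<Rightarrow> 'v set \<Rightarrow> 'v set set" where
  "Fres F A = {e \<in> F. e \<subseteq> A}"

lemma good_edges_sub: "good_edges V F \<Longrightarrow> e \<in> F \<Longrightarrow> e \<subseteq> V \<and> e \<noteq> {}"
  unfolding good_edges_def by fastforce

lemma good_edges_Fres: assumes "good_edges V F" shows "good_edges A (Fres F A)"
  unfolding good_edges_def
proof
  fix e assume "e \<in> Fres F A"
  then have e: "e \<in> F" "e \<subseteq> A" unfolding Fres_def by auto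
  have "\<exists>u w. u \<noteq> w \<and> u \<in> V \<and> w \<in> V \<and> e = {u, w}"
    using assms e(1) unfolding good_edges_def by (rule bspec)
  then obtain u w where "u \<noteq> w" "e = {u, w}" by blast
  then show "\<exists>u w. u \<noteq> w \<and> u \<in> A \<and> w \<in> A \<and> e = {u, w}" using e(2) by blast
qed

lemma cl_restrict_aux:
  assumes ge: "good_edges V F" and cA: "closed_set F A" and vA: "v \<in> A"
    and p: "(v, u) \<in> (erel F)\<^sup>*"
  shows "u \<in> A \<and> (v, u) \<in> (erel (Fres F A))\<^sup>*"
  using p
proof (induction rule: rtrancl_induct)
  case base then show ?case using vA by simp
next
  case (step y z)
  have yz: "{y, z} \<in> F" using step(2) unfolding erel_def by simp
  have yA: "y \<in> A" using step(3) by simp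
  have "\<forall>e\<in>F. e \<subseteq> A \<or> e \<inter> A = {}" using cA unfolding closed_set_def .
  then have "{y, z} \<subseteq> A \<or> {y, z} \<inter> A = {}" using yz by (rule bspec)
  then have sub: "{y, z} \<subseteq> A" using yA by auto
  then have yzr: "(y, z) \<in> erel (Fres F A)" using yz unfolding erel_def Fres_def by simp
  have "(v, y) \<in> (erel (Fres F A))\<^sup>*" using step(3) by simp
  then have "(v, z) \<in> (erel (Fres F A))\<^sup>*" using yzr by (rule rtrancl.rtrancl_into_rtrancl)
  moreover have "z \<in> A" using sub by simp
  ultimately show ?case by simp
qed

lemma erel_Fres_mono: "erel (Fres F A) \<subseteq> erel F"
  unfolding erel_def Fres_def by auto

lemma cl_restrict:
  assumes ge: "good_edges V F" and cA: "closed_set F A" and vA: "v \<in> A"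
  shows "cl (Fres F A) v = cl F v \<and> cl F v \<subseteq> A"
proof -
  have 1: "cl F v \<subseteq> cl (Fres F A) v"
    using cl_restrict_aux[OF ge cA vA] unfolding cl_def by blast
  have 2: "cl (Fres F A) v \<subseteq> cl F v"
    unfolding cl_def using rtrancl_mono[OF erel_Fres_mono[of F A]] by blast
  have 3: "cl F v \<subseteq> A"
    using cl_restrict_aux[OF ge cA vA] unfolding cl_def by blast
  show ?thesis using 1 2 3 by blast
qed

lemma comps_restrict:
  assumes ge: "good_edges V F" and AV: "A \<subseteq> V" and cA: "closed_set F A"
  shows "comps A (Fres F A) = {B \<in> comps V F. B \<subseteq> A}"
proof -
  have "comps A (Fres F A) = cl F ` A"
    unfolding comps_def using cl_restrict[OF ge cA] by (intro image_cong) auto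
  also have "\<dots> = {B \<in> comps V F. B \<subseteq> A}"
  proof (intro equalityI subsetI)
    fix B assume "B \<in> cl F ` A"
    then obtain v where v: "v \<in> A" "B = cl F v" by auto
    then show "B \<in> {B \<in> comps V F. B \<subseteq> A}"
      using cl_restrict[OF ge cA v(1)] AV unfolding comps_def by auto
  next
    fix B assume "B \<in> {B \<in> comps V F. B \<subseteq> A}"
    then obtain v where v: "v \<in> V" "B = cl F v" "B \<subseteq> A" unfolding comps_def by auto
    then have "v \<in> A" using cl_refl[of v F] by auto
    then show "B \<in> cl F ` A" using v by auto
  qed
  finally show ?thesis .
qed

lemma closed_compl:
  assumes ge: "good_edges V F" and cA: "closed_set F A"
  shows "closed_set F (V - A)"
  unfolding closed_set_def
proof
  fix e assume e: "e \<in> F"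
  have "e \<subseteq> V" using good_edges_sub[OF ge e] by simp
  then show "e \<subseteq> V - A \<or> e \<inter> (V - A) = {}" using cA e unfolding closed_set_def by blast
qed

lemma comps_block_side:
  assumes ge: "good_edges V F" and cA: "closed_set F A" and B: "B \<in> comps V F"
  shows "B \<subseteq> A \<or> B \<subseteq> V - A"
proof -
  obtain v where v: "v \<in> V" "B = cl F v" using B unfolding comps_def by auto
  show ?thesis
  proof (cases "v \<in> A")
    case True then show ?thesis using cl_restrict[OF ge cA True] v by simp
  next
    case False
    then have "v \<in> V - A" using v by simp
    then show ?thesis using cl_restrict[OF ge closed_compl[OF ge cA]] v by blast
  qed
qed

lemma comps_compl:
  assumes ge: "good_edges V F" and AV: "A \<subseteq> V" and cA: "closed_set F A"
  shows "comps (V - A) (Fres F (V - A)) = comps V F - {B \<in> comps V F. B \<subseteq> A}"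
proof -
  have "comps (V - A) (Fres F (V - A)) = {B \<in> comps V F. B \<subseteq> V - A}"
    by (rule comps_restrict[OF ge _ closed_compl[OF ge cA]]) auto
  also have "\<dots> = comps V F - {B \<in> comps V F. B \<subseteq> A}"
  proof (intro equalityI subsetI)
    fix B assume "B \<in> {B \<in> comps V F. B \<subseteq> V - A}"
    then have B: "B \<in> comps V F" "B \<subseteq> V - A" by auto
    have "B \<noteq> {}" using comps_partition[OF ge] B(1) unfolding is_partition_def by blast
    then have "\<not> B \<subseteq> A" using B(2) by blast
    then show "B \<in> comps V F - {B \<in> comps V F. B \<subseteq> A}" using B by simp
  next
    fix B assume "B \<in> comps V F - {B \<in> comps V F. B \<subseteq> A}"
    then have B: "B \<in> comps V F" "\<not> B \<subseteq> A" by auto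
    then show "B \<in> {B \<in> comps V F. B \<subseteq> V - A}" using comps_block_side[OF ge cA B(1)] by simp
  qed
  finally show ?thesis .
qed

lemma closed_Union:
  assumes ge: "good_edges V F" and Q: "Q \<subseteq> comps V F"
  shows "closed_set F (\<Union>Q)"
  unfolding closed_set_def
proof
  fix e assume e: "e \<in> F"
  have "\<exists>u w. u \<noteq> w \<and> u \<in> V \<and> w \<in> V \<and> e = {u, w}" using ge e unfolding good_edges_def by simp
  then obtain a b where ab: "e = {a, b}" by blast
  have ab1: "(a, b) \<in> erel F" "(b, a) \<in> erel F" using e ab unfolding erel_def by (auto simp: insert_commute)
  have side: "y \<in> \<Union>Q" if xQ: "x \<in> \<Union>Q" and xy: "(x, y) \<in> erel F" for x y
  proof -
    obtain B where B: "B \<in> Q" "x \<in> B" using xQ by auto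
    obtain w where w: "B = cl F w" using B(1) Q unfolding comps_def by auto
    have "cl F x = B" using cl_eq[of x F w] B(2) w by simp
    moreover have "y \<in> cl F x" using xy unfolding cl_def by simp
    ultimately show ?thesis using B(1) by auto
  qed
  show "e \<subseteq> \<Union>Q \<or> e \<inter> \<Union>Q = {}"
  proof (cases "a \<in> \<Union>Q \<or> b \<in> \<Union>Q")
    case True
    then have "a \<in> \<Union>Q \<and> b \<in> \<Union>Q" using side ab1 by blast
    then show ?thesis using ab by simp
  next
    case False
    then show ?thesis using ab by simp
  qed
qed

lemma valid_shapeP:
  assumes fV: "finite V" and part: "is_partition V P"
  shows "valid_shape (shapeP wt P)"
  unfolding valid_shape_def shapeP_def
proof
  assume "(0, 0) \<in># image_mset (hshape wt) (mset_set P)"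
  then obtain B where B: "B \<in># mset_set P" "hshape wt B = (0, 0)" by auto
  have fP: "finite P" using partition_finite[OF fV part] .
  then have BP: "B \<in> P" using B(1) by simp
  then have "B \<noteq> {}" "B \<subseteq> V" using part unfolding is_partition_def by auto
  then have "card B \<noteq> 0" using fV finite_subset by fastforce
  then show False using B(2) unfolding hshape_def by simp
qed

lemma wg_sub:
  assumes "weighted_graph V E wt" "A \<subseteq> V"
  shows "weighted_graph A (induced_edges E A) wt"
  unfolding weighted_graph_def
proof (intro conjI ballI)
  show "finite A" using assms finite_subset unfolding weighted_graph_def by blast
next
  fix e assume "e \<in> induced_edges E A"
  then have e: "e \<in> E" "e \<subseteq> A" unfolding induced_edges_def by auto
  have "\<exists>u v. u \<noteq> v \<and> u \<in> V \<and> v \<in> V \<and> e = {u, v}"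
    using assms(1) e(1) unfolding weighted_graph_def by blast
  then obtain u v where "u \<noteq> v" "e = {u, v}" by blast
  then show "\<exists>u v. u \<noteq> v \<and> u \<in> A \<and> v \<in> A \<and> e = {u, v}" using e(2) by blast
next
  fix v assume "v \<in> A"
  then show "1 \<le> wt v" using assms unfolding weighted_graph_def by blast
qed

lemma ge_of_wg: "weighted_graph V E wt \<Longrightarrow> F \<subseteq> E \<Longrightarrow> good_edges V F"
  unfolding weighted_graph_def good_edges_def by blast

lemma wg_finE: assumes "weighted_graph V E wt" shows "finite E" "finite V"
proof -
  show fV: "finite V" using assms unfolding weighted_graph_def by simp
  have "E \<subseteq> Pow V" using assms unfolding weighted_graph_def by auto
  then show "finite E" using fV by (meson finite_Pow_iff finite_subset)
qed

lemma f_chrom: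
  assumes hom: "ring_hom_C \<phi>" and lin: "c_linear_on_Mac2 \<phi> f" and wg: "weighted_graph V E wt"
  shows "f (chromMac V E wt) = (\<Sum>F\<in>Pow E. (-1) ^ card F * f (pcoef (shapeP wt (comps V F))))"
proof -
  have mem: "\<forall>F\<in>Pow E. pcoef (shapeP wt (comps V F)) \<in> Mac2"
  proof
    fix F assume "F \<in> Pow E"
    then have "good_edges V F" using ge_of_wg[OF wg] by blast
    then show "pcoef (shapeP wt (comps V F)) \<in> Mac2"
      using pcoef_Mac2 valid_shapeP comps_partition wg_finE(2)[OF wg] by blast
  qed
  have "f (chromMac V E wt) = (\<Sum>F\<in>Pow E. \<phi> ((-1) ^ card F) * f (pcoef (shapeP wt (comps V F))))"
    unfolding chrom_expansion[OF wg]
    using lin_sum[OF hom lin _ mem, of "\<lambda>F. (-1) ^ card F"] wg_finE(1)[OF wg] by simp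
  then show ?thesis using phi_pow_neg1[OF hom] by simp
qed

lemma conv_chrom:
  assumes hom: "ring_hom_C \<phi>" and wg: "weighted_graph V E wt"
  shows "conv \<phi> f g (chromMac V E wt) =
    (\<Sum>F\<in>Pow E. (-1) ^ card F * conv_basis f g (shapeP wt (comps V F)))"
proof -
  let ?sh = "\<lambda>F. shapeP wt (comps V F)"
  let ?S0 = "?sh ` Pow E"
  define c0 where "c0 \<Lambda> = (\<Sum>F\<in>{F \<in> Pow E. ?sh F = \<Lambda>}. (-1::complex) ^ card F)" for \<Lambda>
  have fE: "finite E" "finite V" using wg_finE[OF wg] by auto
  have fS: "finite ?S0" using fE by simp
  have val: "\<forall>\<Lambda>\<in>?S0. valid_shape \<Lambda>"
  proof
    fix \<Lambda> assume "\<Lambda> \<in> ?S0"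
    then obtain F where F: "F \<in> Pow E" "\<Lambda> = ?sh F" by auto
    then have "good_edges V F" using ge_of_wg[OF wg] by blast
    then show "valid_shape \<Lambda>" using F valid_shapeP comps_partition fE(2) by blast
  qed
  have rep: "chromMac V E wt = lincomb ?S0 c0"
  proof
    fix m
    have "lincomb ?S0 c0 m = (\<Sum>\<Lambda>\<in>?S0. \<Sum>F\<in>{F \<in> Pow E. ?sh F = \<Lambda>}. (-1) ^ card F * pcoef (?sh F) m)"
      unfolding lincomb_def c0_def by (intro sum.cong refl) (simp add: sum_distrib_right)
    also have "\<dots> = (\<Sum>F\<in>Pow E. (-1) ^ card F * pcoef (?sh F) m)"
      by (rule sum.group) (use fE in auto)
    finally show "chromMac V E wt m = lincomb ?S0 c0 m" unfolding chrom_expansion[OF wg] by simp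
  qed
  have "conv \<phi> f g (chromMac V E wt) = (\<Sum>\<Lambda>\<in>?S0. \<phi> (c0 \<Lambda>) * conv_basis f g \<Lambda>)"
    by (rule conv_eq[OF hom fS val rep])
  also have "\<dots> = (\<Sum>\<Lambda>\<in>?S0. \<Sum>F\<in>{F \<in> Pow E. ?sh F = \<Lambda>}. (-1) ^ card F * conv_basis f g (?sh F))"
    unfolding c0_def phi_sum[OF hom] phi_pow_neg1[OF hom]
    by (intro sum.cong refl) (simp add: sum_distrib_right)
  also have "\<dots> = (\<Sum>F\<in>Pow E. (-1) ^ card F * conv_basis f g (?sh F))"
    by (rule sum.group) (use fE in auto)
  finally show ?thesis .
qed

lemma sum_Q_to_A:
  assumes ge: "good_edges V F" and fV: "finite V"
  shows "(\<Sum>Q\<in>Pow (comps V F). X Q (comps V F - Q)) =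
    (\<Sum>A\<in>{A \<in> Pow V. closed_set F A}. X (comps A (Fres F A)) (comps (V - A) (Fres F (V - A))))"
proof (rule sum.reindex_bij_witness[where j = "\<lambda>Q. \<Union>Q" and i = "\<lambda>A. {B \<in> comps V F. B \<subseteq> A}"])
  have part: "is_partition V (comps V F)" using comps_partition[OF ge] .
  {
    fix Q assume Q: "Q \<in> Pow (comps V F)"
    show "{B \<in> comps V F. B \<subseteq> \<Union>Q} = Q"
    proof (intro equalityI subsetI)
      fix B assume B: "B \<in> {B \<in> comps V F. B \<subseteq> \<Union>Q}"
      then have "B \<noteq> {}" using part unfolding is_partition_def by blast
      then obtain v where v: "v \<in> B" by blast
      then obtain B' where B': "B' \<in> Q" "v \<in> B'" using B by blast
      obtain w where w: "B = cl F w" using B unfolding comps_def by auto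
      obtain w' where w': "B' = cl F w'" using B' Q unfolding comps_def by auto
      have "cl F v = B" using cl_eq[of v F w] v w by simp
      moreover have "cl F v = B'" using cl_eq[of v F w'] B' w' by simp
      ultimately show "B \<in> Q" using B' by simp
    next
      fix B assume "B \<in> Q"
      then show "B \<in> {B \<in> comps V F. B \<subseteq> \<Union>Q}" using Q by auto
    qed
    note iQ = this
    have UV: "\<Union>Q \<subseteq> V" using Q part unfolding is_partition_def by blast
    show "\<Union>Q \<in> {A \<in> Pow V. closed_set F A}" using UV closed_Union[OF ge] Q by simp
    have cU: "closed_set F (\<Union>Q)" using closed_Union[OF ge] Q by simp
    have "comps (\<Union>Q) (Fres F (\<Union>Q)) = Q"
      using comps_restrict[OF ge UV cU] iQ by simp
    moreover have "comps (V - \<Union>Q) (Fres F (V - \<Union>Q)) = comps V F - Q"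
      using comps_compl[OF ge UV cU] iQ by simp
    ultimately show "X (comps (\<Union>Q) (Fres F (\<Union>Q))) (comps (V - \<Union>Q) (Fres F (V - \<Union>Q))) = X Q (comps V F - Q)"
      by simp
  }
  {
    fix A assume A: "A \<in> {A \<in> Pow V. closed_set F A}"
    then have AV: "A \<subseteq> V" and cA: "closed_set F A" by auto
    show "\<Union>{B \<in> comps V F. B \<subseteq> A} = A"
    proof (intro equalityI subsetI)
      fix v assume "v \<in> \<Union>{B \<in> comps V F. B \<subseteq> A}"
      then show "v \<in> A" by blast
    next
      fix v assume v: "v \<in> A"
      have "cl F v \<in> comps V F" using v AV unfolding comps_def by auto
      moreover have "cl F v \<subseteq> A" using cl_restrict[OF ge cA v] by simp
      ultimately show "v \<in> \<Union>{B \<in> comps V F. B \<subseteq> A}" using cl_refl[of v F] by blast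
    qed
    show "{B \<in> comps V F. B \<subseteq> A} \<in> Pow (comps V F)" by auto
  }
qed

lemma sum_F_split:
  fixes Y :: "'v set set \<Rightarrow> 'v set set \<Rightarrow> 'r::comm_ring_1"
  assumes wg: "weighted_graph V E wt" and AV: "A \<subseteq> V"
  shows "(\<Sum>F\<in>{F \<in> Pow E. closed_set F A}. (-1) ^ card F * Y (Fres F A) (Fres F (V - A))) =
    (\<Sum>F1\<in>Pow (induced_edges E A). \<Sum>F2\<in>Pow (induced_edges E (V - A)).
        (-1) ^ card F1 * (-1) ^ card F2 * Y F1 F2)"
proof -
  have fE: "finite E" using wg_finE[OF wg] by simp
  have ne: "e \<noteq> {}" "e \<subseteq> V" if "e \<in> E" for e
    using good_edges_sub[OF ge_of_wg[OF wg order_refl] that] by auto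
  have "(\<Sum>F1\<in>Pow (induced_edges E A). \<Sum>F2\<in>Pow (induced_edges E (V - A)).
        (-1) ^ card F1 * (-1) ^ card F2 * Y F1 F2) =
     (\<Sum>p\<in>Pow (induced_edges E A) \<times> Pow (induced_edges E (V - A)).
        (-1) ^ card (fst p) * (-1) ^ card (snd p) * Y (fst p) (snd p))"
    by (simp add: sum.cartesian_product split_beta)
  also have "\<dots> = (\<Sum>F\<in>{F \<in> Pow E. closed_set F A}. (-1) ^ card F * Y (Fres F A) (Fres F (V - A)))"
  proof (rule sum.reindex_bij_witness[where j = "\<lambda>p. fst p \<union> snd p" and i = "\<lambda>F. (Fres F A, Fres F (V - A))"])
    fix p assume p: "p \<in> Pow (induced_edges E A) \<times> Pow (induced_edges E (V - A))"
    obtain F1 F2 where pe: "p = (F1, F2)" by (cases p)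
    have F1: "F1 \<subseteq> E" "\<forall>e\<in>F1. e \<subseteq> A" using p pe unfolding induced_edges_def by auto
    have F2: "F2 \<subseteq> E" "\<forall>e\<in>F2. e \<subseteq> V - A" using p pe unfolding induced_edges_def by auto
    have r1: "Fres (F1 \<union> F2) A = F1"
    proof (intro equalityI subsetI)
      fix e assume e: "e \<in> Fres (F1 \<union> F2) A"
      show "e \<in> F1"
      proof (rule ccontr)
        assume "e \<notin> F1"
        then have e2: "e \<in> F2" "e \<subseteq> A" using e unfolding Fres_def by auto
        then have "e \<in> E" using F2(1) by blast
        then have "e \<subseteq> V - A" "e \<subseteq> A" "e \<noteq> {}" using F2(2) e2 ne(1) by auto
        then show False by blast
      qed
    next
      fix e assume "e \<in> F1" then show "e \<in> Fres (F1 \<union> F2) A" using F1 unfolding Fres_def by auto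
    qed
    have r2: "Fres (F1 \<union> F2) (V - A) = F2"
    proof (intro equalityI subsetI)
      fix e assume e: "e \<in> Fres (F1 \<union> F2) (V - A)"
      show "e \<in> F2"
      proof (rule ccontr)
        assume "e \<notin> F2"
        then have e1: "e \<in> F1" "e \<subseteq> V - A" using e unfolding Fres_def by auto
        then have "e \<in> E" using F1(1) by blast
        then have "e \<subseteq> V - A" "e \<subseteq> A" "e \<noteq> {}" using F1(2) e1 ne(1) by auto
        then show False by blast
      qed
    next
      fix e assume "e \<in> F2" then show "e \<in> Fres (F1 \<union> F2) (V - A)" using F2 unfolding Fres_def by auto
    qed
    show "(Fres (fst p \<union> snd p) A, Fres (fst p \<union> snd p) (V - A)) = p" using r1 r2 pe by simp
    have cl: "closed_set (F1 \<union> F2) A" unfolding closed_set_def using F1 F2 by blast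
    show "fst p \<union> snd p \<in> {F \<in> Pow E. closed_set F A}" using cl F1 F2 pe by simp
    have disj: "F1 \<inter> F2 = {}"
    proof (rule ccontr)
      assume "F1 \<inter> F2 \<noteq> {}"
      then obtain e where e: "e \<in> F1" "e \<in> F2" by blast
      then have "e \<in> E" using F1(1) by blast
      then have "e \<subseteq> A" "e \<subseteq> V - A" "e \<noteq> {}" using F1(2) F2(2) e ne(1) by auto
      then show False by blast
    qed
    have fin: "finite F1" "finite F2" using F1(1) F2(1) fE finite_subset by auto
    have "card (F1 \<union> F2) = card F1 + card F2" using card_Un_disjoint[OF fin disj] .
    then show "(-1) ^ card (fst p \<union> snd p) * Y (Fres (fst p \<union> snd p) A) (Fres (fst p \<union> snd p) (V - A)) =
        (-1) ^ card (fst p) * (-1) ^ card (snd p) * Y (fst p) (snd p)"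
      using r1 r2 pe by (simp add: power_add)
  next
    fix F assume F: "F \<in> {F \<in> Pow E. closed_set F A}"
    then have FE: "F \<subseteq> E" and cA: "closed_set F A" by auto
    show "fst (Fres F A, Fres F (V - A)) \<union> snd (Fres F A, Fres F (V - A)) = F"
    proof (intro equalityI subsetI)
      fix e assume "e \<in> fst (Fres F A, Fres F (V - A)) \<union> snd (Fres F A, Fres F (V - A))"
      then show "e \<in> F" unfolding Fres_def by auto
    next
      fix e assume e: "e \<in> F"
      have "e \<subseteq> A \<or> e \<inter> A = {}" using cA e unfolding closed_set_def by blast
      moreover have "e \<subseteq> V" using ne FE e by auto
      ultimately have "e \<subseteq> A \<or> e \<subseteq> V - A" by blast
      then show "e \<in> fst (Fres F A, Fres F (V - A)) \<union> snd (Fres F A, Fres F (V - A))"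
        using e unfolding Fres_def by auto
    qed
    show "(Fres F A, Fres F (V - A)) \<in> Pow (induced_edges E A) \<times> Pow (induced_edges E (V - A))"
      using FE unfolding Fres_def induced_edges_def by auto
  qed
  finally show ?thesis by simp
qed

theorem corollary3p14:
  fixes \<phi> :: "complex \<Rightarrow> 'r::comm_ring_1"
    and f g :: "ps2 \<Rightarrow> 'r"
    and V :: "'v set" and E :: "'v set set" and wt :: "'v \<Rightarrow> nat"
  assumes "ring_hom_C \<phi>"
    and "c_linear_on_Mac2 \<phi> f" and "c_linear_on_Mac2 \<phi> g"
    and "weighted_graph V E wt"
  shows "conv \<phi> f g (chromMac V E wt) =
    (\<Sum>A\<in>Pow V. f (chromMac A (induced_edges E A) wt) *
                g (chromMac (V - A) (induced_edges E (V - A)) wt))"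
proof -
  note hom = assms(1) and linf = assms(2) and ling = assms(3) and wg = assms(4)
  have fE: "finite E" and fV: "finite V" using wg_finE[OF wg] by auto
  define X where "X Q1 Q2 = f (pcoef (shapeP wt Q1)) * g (pcoef (shapeP wt Q2))" for Q1 Q2 :: "'v set set"
  have ge: "good_edges V F" if "F \<in> Pow E" for F using ge_of_wg[OF wg] that by blast
  have "conv \<phi> f g (chromMac V E wt) = (\<Sum>F\<in>Pow E. (-1) ^ card F * conv_basis f g (shapeP wt (comps V F)))"
    by (rule conv_chrom[OF hom wg])
  also have "\<dots> = (\<Sum>F\<in>Pow E. (-1) ^ card F *
      (\<Sum>A\<in>{A \<in> Pow V. closed_set F A}. X (comps A (Fres F A)) (comps (V - A) (Fres F (V - A)))))"
  proof (rule sum.cong[OF refl])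
    fix F assume F: "F \<in> Pow E"
    have fc: "finite (comps V F)" using partition_finite[OF fV comps_partition[OF ge[OF F]]] .
    have "conv_basis f g (shapeP wt (comps V F)) = (\<Sum>Q\<in>Pow (comps V F). X Q (comps V F - Q))"
      unfolding X_def by (rule conv_basis_shapeP[OF fc])
    also have "\<dots> = (\<Sum>A\<in>{A \<in> Pow V. closed_set F A}. X (comps A (Fres F A)) (comps (V - A) (Fres F (V - A))))"
      by (rule sum_Q_to_A[OF ge[OF F] fV])
    finally show "(-1) ^ card F * conv_basis f g (shapeP wt (comps V F)) = (-1) ^ card F *
      (\<Sum>A\<in>{A \<in> Pow V. closed_set F A}. X (comps A (Fres F A)) (comps (V - A) (Fres F (V - A))))" by simp
  qed
  also have "\<dots> = (\<Sum>F\<in>Pow E. \<Sum>A\<in>{A \<in> Pow V. closed_set F A}.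
      (-1) ^ card F * X (comps A (Fres F A)) (comps (V - A) (Fres F (V - A))))"
    by (simp add: sum_distrib_left)
  also have "\<dots> = (\<Sum>A\<in>Pow V. \<Sum>F\<in>{F \<in> Pow E. closed_set F A}.
      (-1) ^ card F * X (comps A (Fres F A)) (comps (V - A) (Fres F (V - A))))"
    by (rule sum.swap_restrict) (use fE fV in auto)
  also have "\<dots> = (\<Sum>A\<in>Pow V. \<Sum>F1\<in>Pow (induced_edges E A). \<Sum>F2\<in>Pow (induced_edges E (V - A)).
        (-1) ^ card F1 * (-1) ^ card F2 * X (comps A F1) (comps (V - A) F2))"
  proof (rule sum.cong[OF refl])
    fix A assume "A \<in> Pow V"
    then have AV: "A \<subseteq> V" by simp
    show "(\<Sum>F\<in>{F \<in> Pow E. closed_set F A}. (-1) ^ card F * X (comps A (Fres F A)) (comps (V - A) (Fres F (V - A)))) =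
      (\<Sum>F1\<in>Pow (induced_edges E A). \<Sum>F2\<in>Pow (induced_edges E (V - A)).
        (-1) ^ card F1 * (-1) ^ card F2 * X (comps A F1) (comps (V - A) F2))"
      by (rule sum_F_split[OF wg AV, where Y = "\<lambda>F1 F2. X (comps A F1) (comps (V - A) F2)"])
  qed
  also have "\<dots> = (\<Sum>A\<in>Pow V. f (chromMac A (induced_edges E A) wt) *
                g (chromMac (V - A) (induced_edges E (V - A)) wt))"
  proof (rule sum.cong[OF refl])
    fix A assume "A \<in> Pow V"
    then have AV: "A \<subseteq> V" by simp
    have wA: "weighted_graph A (induced_edges E A) wt" using wg_sub[OF wg AV] .
    have wB: "weighted_graph (V - A) (induced_edges E (V - A)) wt" using wg_sub[OF wg, of "V - A"] by auto
    have "(\<Sum>F1\<in>Pow (induced_edges E A). \<Sum>F2\<in>Pow (induced_edges E (V - A)).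
        (-1) ^ card F1 * (-1) ^ card F2 * X (comps A F1) (comps (V - A) F2)) =
      (\<Sum>F1\<in>Pow (induced_edges E A). (-1) ^ card F1 * f (pcoef (shapeP wt (comps A F1)))) *
      (\<Sum>F2\<in>Pow (induced_edges E (V - A)). (-1) ^ card F2 * g (pcoef (shapeP wt (comps (V - A) F2))))"
      unfolding X_def sum_product by (intro sum.cong refl) (simp add: algebra_simps)
    also have "\<dots> = f (chromMac A (induced_edges E A) wt) * g (chromMac (V - A) (induced_edges E (V - A)) wt)"
      using f_chrom[OF hom linf wA] f_chrom[OF hom ling wB] by simp
    finally show "(\<Sum>F1\<in>Pow (induced_edges E A). \<Sum>F2\<in>Pow (induced_edges E (V - A)).
        (-1) ^ card F1 * (-1) ^ card F2 * X (comps A F1) (comps (V - A) F2)) =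
      f (chromMac A (induced_edges E A) wt) * g (chromMac (V - A) (induced_edges E (V - A)) wt)" .
  qed
  finally show ?thesis .
qed

end
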